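(* Let $S$ be a right LCM monoid, and let $F_1,F_2$ be accurate foundation sets for $S$. Then for every unital $*$-homomorphism $\pi$ from $C^*(S)$ into a unital $C^*$-algebra, the following are equivalent: (1) $\sum_{f\in F_1}\pi(e_{fS})=1$ and $\sum_{f\in F_2}\pi(e_{fS})=1$; (2) $\sum_{f\in F_1\cdot F_2}\pi(e_{fS})=1$, where $F_1\cdot F_2=\{st\mid s\in F_1,t\in F_2\}$. (That is, the boundary relation $\sum_{f\in F}e_{fS}=1$ for both $F_1$ and $F_2$ is equivalent to the boundary relation for $F_1\cdot F_2$.)
   Context: A right LCM monoid is a countable discrete monoid $S$ that is left cancellative and such that for all $s,t\in S$ the intersection $sS\cap tS$ is either empty or equal to $rS$ for some $r\in S$. A finite subset $F\subset S$ is a foundation set if for every $t\in S$ there is $s\in F$ with $sS\cap tS\neq\emptyset$; it is accurate if $fS\cap f'S=\emptyset$ for distinct $f,f'\in F$. The full semigroup $C^*$-algebra $C^*(S)$ (in the sense of Li) is the universal $C^*$-algebra generated by isometries $\{v_s: s\in S\}$ and projections $\{e_X : X\in\mathcal{J}(S)\}$, where $\mathcal{J}(S)=\{\emptyset\}\cup\{sS: s\in S\}$, subject to $v_{st}=v_sv_t$, $v_se_Xv_s^*=e_{sX}$, $e_S=1$, $e_\emptyset=0$, $e_Xe_Y=e_{X\cap Y}$; in particular $e_{sS}=v_sv_s^*$. *)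

theory Defs
  imports Complex_Main "HOL-Library.Countable"
begin

definition pideal :: "'a::monoid_mult \<Rightarrow> 'a set" where
  "pideal s = range (\<lambda>x. s * x)"

definition right_LCM_monoid :: "'a::monoid_mult itself \<Rightarrow> bool" where
  "right_LCM_monoid _ \<longleftrightarrow>
     (\<forall>s t u :: 'a. s * t = s * u \<longrightarrow> t = u) \<and>
     (\<forall>s t :: 'a. pideal s \<inter> pideal t = {} \<or> (\<exists>r. pideal s \<inter> pideal t = pideal r))"

definition constr_ideals :: "'a::monoid_mult set set" where
  "constr_ideals = insert {} (range pideal)"

definition foundation_set :: "'a::monoid_mult set \<Rightarrow> bool" where
  "foundation_set F \<longleftrightarrow> finite F \<and> (\<forall>t. \<exists>s\<in>F. pideal s \<inter> pideal t \<noteq> {})"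

definition accurate :: "'a::monoid_mult set \<Rightarrow> bool" where
  "accurate F \<longleftrightarrow> (\<forall>f\<in>F. \<forall>f'\<in>F. f \<noteq> f' \<longrightarrow> pideal f \<inter> pideal f' = {})"

definition set_prod :: "'a::monoid_mult set \<Rightarrow> 'a set \<Rightarrow> 'a set" where
  "set_prod F1 F2 = {s * t | s t. s \<in> F1 \<and> t \<in> F2}"

text \<open>A unital C*-algebra: a (real) Banach algebra with unit, carrying in addition a complex
  scalar multiplication sc extending the real one, and an involution st with the C*-identity.\<close>

definition unital_cstar_algebra ::
  "(complex \<Rightarrow> 'b::{real_normed_algebra_1,banach} \<Rightarrow> 'b) \<Rightarrow> ('b \<Rightarrow> 'b) \<Rightarrow> bool" where
  "unital_cstar_algebra sc st \<longleftrightarrow>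
     (\<forall>r x. sc (complex_of_real r) x = scaleR r x) \<and>
     (\<forall>a x y. sc a (x + y) = sc a x + sc a y) \<and>
     (\<forall>a b x. sc (a + b) x = sc a x + sc b x) \<and>
     (\<forall>a b x. sc (a * b) x = sc a (sc b x)) \<and>
     (\<forall>a x y. sc a (x * y) = sc a x * y \<and> sc a (x * y) = x * sc a y) \<and>
     (\<forall>a x. norm (sc a x) = cmod a * norm x) \<and>
     (\<forall>x. st (st x) = x) \<and>
     (\<forall>x y. st (x + y) = st x + st y) \<and>
     (\<forall>x y. st (x * y) = st y * st x) \<and>
     (\<forall>a x. st (sc a x) = sc (cnj a) (st x)) \<and>
     (\<forall>x. norm (st x * x) = (norm x)\<^sup>2)"

text \<open>By the universal property, unital *-homomorphisms from C*(S) into B correspond exactly to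
  families (v s, e X) = (pi(v_s), pi(e_X)) in B satisfying the defining relations of C*(S).\<close>

definition li_representation ::
  "('b::ring_1 \<Rightarrow> 'b) \<Rightarrow> ('a::monoid_mult \<Rightarrow> 'b) \<Rightarrow> ('a set \<Rightarrow> 'b) \<Rightarrow> bool" where
  "li_representation st v e \<longleftrightarrow>
     (\<forall>s. st (v s) * v s = 1) \<and>
     (\<forall>X\<in>constr_ideals. st (e X) = e X \<and> e X * e X = e X) \<and>
     (\<forall>s t. v (s * t) = v s * v t) \<and>
     (\<forall>s. \<forall>X\<in>constr_ideals. v s * e X * st (v s) = e ((\<lambda>x. s * x) ` X)) \<and>
     e UNIV = 1 \<and> e {} = 0 \<and>
     (\<forall>X\<in>constr_ideals. \<forall>Y\<in>constr_ideals. e X * e Y = e (X \<inter> Y))"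

end

theory Submission
  imports Defs
begin

theorem lemma2p3:
  fixes F1 F2 :: "'a::{monoid_mult,countable} set"
    and sc :: "complex \<Rightarrow> 'b::{real_normed_algebra_1,banach} \<Rightarrow> 'b"
    and st :: "'b \<Rightarrow> 'b"
    and v :: "'a \<Rightarrow> 'b" and e :: "'a set \<Rightarrow> 'b"
  assumes "right_LCM_monoid TYPE('a)"
    and "foundation_set F1" and "accurate F1"
    and "foundation_set F2" and "accurate F2"
    and "unital_cstar_algebra sc st"
    and "li_representation st v e"
  shows "((\<Sum>f\<in>F1. e (pideal f)) = 1 \<and> (\<Sum>f\<in>F2. e (pideal f)) = 1)
         \<longleftrightarrow> (\<Sum>f\<in>set_prod F1 F2. e (pideal f)) = 1"
proof -
  have canc: "\<And>s t u::'a. s * t = s * u \<Longrightarrow> t = u"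
    using assms(1) unfolding right_LCM_monoid_def by blast
  have fin1: "finite F1" and fin2: "finite F2"
    using assms(2,4) unfolding foundation_set_def by auto
  obtain s1 where s1: "s1 \<in> F1"
    using assms(2) unfolding foundation_set_def by blast
  have iso: "\<And>s. st (v s) * v s = 1"
   and conj: "\<And>s X. X \<in> constr_ideals \<Longrightarrow> v s * e X * st (v s) = e ((\<lambda>x. s * x) ` X)"
   and eU: "e UNIV = 1" and e0: "e {} = 0"
   and emul: "\<And>X Y. X \<in> constr_ideals \<Longrightarrow> Y \<in> constr_ideals \<Longrightarrow> e X * e Y = e (X \<inter> Y)"
    using assms(7) unfolding li_representation_def by auto
  have pic: "\<And>s. pideal s \<in> constr_ideals" unfolding constr_ideals_def by auto
  have Uc: "(UNIV::'a set) \<in> constr_ideals"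
  proof -
    have "pideal (1::'a) = UNIV" unfolding pideal_def by auto
    then show ?thesis using pic[of "1::'a"] by simp
  qed
  define p where "p s = e (pideal s)" for s
  have p_v: "p s = v s * st (v s)" for s
  proof -
    have "(\<lambda>x. s * x) ` UNIV = pideal s" unfolding pideal_def by simp
    then show ?thesis using conj[OF Uc, of s] eU unfolding p_def by simp
  qed
  have p_prod: "p (s * t) = v s * p t * st (v s)" for s t
  proof -
    have "(\<lambda>x. s * x) ` pideal t = pideal (s * t)" unfolding pideal_def
      by (auto simp: image_image mult.assoc)
    then show ?thesis using conj[OF pic, of s t] unfolding p_def by simp
  qed
  have orth: "p s * p s' = 0" if "s \<in> F1" "s' \<in> F1" "s \<noteq> s'" for s s'
    using assms(3) that emul[OF pic pic, of s s'] e0 unfolding accurate_def p_def by auto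
  have pv: "p s * v s = v s" for s
    by (simp add: p_v mult.assoc iso)
  have inj: "inj_on (\<lambda>(s, t). s * t) (F1 \<times> F2)"
  proof (rule inj_onI, clarsimp)
    fix s t s' t'
    assume h: "s \<in> F1" "t \<in> F2" "s' \<in> F1" "t' \<in> F2" "s * t = s' * t'"
    have "s = s'"
    proof (rule ccontr)
      assume "s \<noteq> s'"
      then have "pideal s \<inter> pideal s' = {}" using assms(3) h unfolding accurate_def by auto
      moreover have "s * t \<in> pideal s" "s * t \<in> pideal s'" using h(5) unfolding pideal_def by (metis rangeI)+
      ultimately show False by auto
    qed
    then show "s = s' \<and> t = t'" using canc h(5) by auto
  qed
  have sp: "set_prod F1 F2 = (\<lambda>(s, t). s * t) ` (F1 \<times> F2)"
    unfolding set_prod_def by auto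
  define q where "q = (\<Sum>t\<in>F2. p t)"
  have R: "(\<Sum>f\<in>set_prod F1 F2. p f) = (\<Sum>s\<in>F1. v s * q * st (v s))"
  proof -
    have "(\<Sum>f\<in>set_prod F1 F2. p f) = (\<Sum>x\<in>F1 \<times> F2. p ((\<lambda>(s, t). s * t) x))"
      unfolding sp using sum.reindex[OF inj, of p] by (simp add: comp_def)
    also have "\<dots> = (\<Sum>s\<in>F1. \<Sum>t\<in>F2. p (s * t))"
      by (simp add: sum.cartesian_product split_def)
    also have "\<dots> = (\<Sum>s\<in>F1. v s * q * st (v s))"
      unfolding q_def p_prod by (simp add: sum_distrib_left sum_distrib_right)
    finally show ?thesis .
  qed
  show ?thesis unfolding p_def[symmetric] R[symmetric] q_def[symmetric]
  proof
    assume "(\<Sum>f\<in>F1. p f) = 1 \<and> q = 1"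
    then show "(\<Sum>f\<in>set_prod F1 F2. p f) = 1" using R p_v by simp
  next
    assume H: "(\<Sum>f\<in>set_prod F1 F2. p f) = 1"
    then have R1: "(\<Sum>s\<in>F1. v s * q * st (v s)) = 1" using R by simp
    have "p s1 = p s1 * (\<Sum>s\<in>F1. v s * q * st (v s))" using R1 by simp
    also have "\<dots> = (\<Sum>s\<in>F1. p s1 * v s * q * st (v s))"
      by (simp add: sum_distrib_left mult.assoc)
    also have "\<dots> = (\<Sum>s\<in>{s1}. p s1 * v s * q * st (v s))"
    proof (rule sum.mono_neutral_right[OF fin1])
      show "{s1} \<subseteq> F1" using s1 by simp
      show "\<forall>i\<in>F1 - {s1}. p s1 * v i * q * st (v i) = 0"
      proof
        fix i assume "i \<in> F1 - {s1}"
        then have "p s1 * p i = 0" using orth s1 by auto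
        then have "p s1 * v i = 0" by (metis pv mult.assoc mult_zero_left)
        then show "p s1 * v i * q * st (v i) = 0" by simp
      qed
    qed
    also have "\<dots> = v s1 * q * st (v s1)" by (simp add: pv)
    finally have E: "p s1 = v s1 * q * st (v s1)" .
    have "1 = st (v s1) * p s1 * v s1" by (simp add: p_v mult.assoc iso)
    also have "\<dots> = q" unfolding E by (simp add: mult.assoc iso flip: mult.assoc[of "st (v s1)" "v s1"])
    finally have q1: "q = 1" by simp
    have "(\<Sum>f\<in>F1. p f) = 1" using R1 q1 p_v by simp
    then show "(\<Sum>f\<in>F1. p f) = 1 \<and> q = 1" using q1 by simp
  qed
qed

end
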